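(* For every integer $n\ge0$, \[ \sum_{k=0}^{n}\sum_{p=0}^{n-k}\frac{\ln^p2}{p!}\operatorname{Li}_{n-k+2-p,\{1\}_k}\!\left(\tfrac12\right)=\frac{1-2^{n+1}}{(n+2)!}\ln^{n+2}2+\frac12\sum_{k=0}^{n}\zeta(n-k+2,\{1\}_k). \]
   Context: Multiple zeta values: $\zeta(s_1,\dots,s_l):=\sum_{n_1>\cdots>n_l>0}n_1^{-s_1}\cdots n_l^{-s_l}$ ($s_1\ge2$). Multiple polylogarithm: $\operatorname{Li}_{s_1,\dots,s_l}(z):=\sum_{n_1>n_2>\cdots>n_l>0}\frac{z^{n_1}}{n_1^{s_1}\cdots n_l^{s_l}}$. The notation $\{1\}_k$ denotes the string $1,1,\dots,1$ ($k$ times); for $k=0$ it is empty. *)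

theory Defs
  imports "HOL-Analysis.Analysis"
begin

definition mz_indices :: "nat \<Rightarrow> nat list set" where
  "mz_indices l = {ns. length ns = l \<and> sorted_wrt (>) ns \<and> (\<forall>n\<in>set ns. n > 0)}"

definition mpolylog :: "nat list \<Rightarrow> real \<Rightarrow> real" where
  "mpolylog s z = (\<Sum>\<^sub>\<infinity>ns\<in>mz_indices (length s).
      z ^ hd ns / (\<Prod>i<length s. real (ns ! i) ^ (s ! i)))"

definition mzeta :: "nat list \<Rightarrow> real" where
  "mzeta s = (\<Sum>\<^sub>\<infinity>ns\<in>mz_indices (length s).
      1 / (\<Prod>i<length s. real (ns ! i) ^ (s ! i)))"

end

theory Submission
  imports Defs "HOL-Real_Asymp.Real_Asymp"
begin

fun E :: "nat \<Rightarrow> nat \<Rightarrow> real" where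
  "E 0 N = 1"
| "E (Suc k) N = (\<Sum>j<N. E k j / real j)"

lemma E_nonneg: "E k N \<ge> 0"
  by (induction k arbitrary: N) (auto intro!: sum_nonneg divide_nonneg_nonneg)

lemma E_mono: "N \<le> N' \<Longrightarrow> E k N \<le> E k N'"
proof (induction k arbitrary: N N')
  case 0 then show ?case by simp
next
  case (Suc k)
  have "(\<Sum>j<N. E k j / real j) \<le> (\<Sum>j<N'. E k j / real j)"
    by (rule sum_mono2) (use Suc.prems in \<open>auto intro!: divide_nonneg_nonneg E_nonneg\<close>)
  then show ?case by simp
qed

definition H :: "nat \<Rightarrow> real" where "H N = (\<Sum>j<N. 1 / real j)"

lemma H_nonneg: "H N \<ge> 0" unfolding H_def by (auto intro!: sum_nonneg)

lemma E_le_H: "E k N \<le> H N ^ k"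
proof (induction k)
  case 0 then show ?case by simp
next
  case (Suc k)
  have "E (Suc k) N = (\<Sum>j<N. E k j / real j)" by simp
  also have "\<dots> \<le> (\<Sum>j<N. E k N * (1 / real j))"
    by (intro sum_mono) (auto intro!: divide_right_mono E_mono simp: divide_simps)
  also have "\<dots> = E k N * H N" by (simp add: H_def sum_distrib_left)
  also have "\<dots> \<le> H N ^ k * H N" by (intro mult_right_mono Suc H_nonneg)
  finally show ?case by (simp add: mult.commute)
qed

lemma H_le_aux: "H (Suc (Suc N)) \<le> 1 + ln (real (Suc N))"
proof (induction N)
  case 0 then show ?case by (simp add: H_def)
next
  case (Suc N)
  have key: "1 / real (Suc (Suc N)) \<le> ln (real (Suc (Suc N))) - ln (real (Suc N))"
  proof -
    have "ln (real (Suc N) / real (Suc (Suc N))) \<le> real (Suc N) / real (Suc (Suc N)) - 1"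
      by (rule ln_le_minus_one) simp
    also have "\<dots> = - (1 / real (Suc (Suc N)))" by (simp add: field_simps)
    finally show ?thesis by (simp add: ln_div)
  qed
  have "H (Suc (Suc (Suc N))) = H (Suc (Suc N)) + 1 / real (Suc (Suc N))"
    by (simp add: H_def)
  also have "\<dots> \<le> 1 + ln (real (Suc (Suc N)))" using Suc key by linarith
  finally show ?case .
qed

lemma H_le: "N \<ge> 1 \<Longrightarrow> H N \<le> 1 + ln (real N)"
proof -
  assume "N \<ge> 1"
  then consider "N = 1" | M where "N = Suc (Suc M)"
    by (metis One_nat_def Suc_le_D not0_implies_Suc not_less_eq_eq)
  then show ?thesis
  proof cases
    case 1 then show ?thesis by (simp add: H_def)
  next
    case 2
    then have "H N \<le> 1 + ln (real (Suc M))" using H_le_aux by simp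
    also have "\<dots> \<le> 1 + ln (real N)" using 2 by simp
    finally show ?thesis .
  qed
qed

lemma ln_le_powr: "(x::real) \<ge> 1 \<Longrightarrow> e > 0 \<Longrightarrow> ln x \<le> x powr e / e"
proof -
  assume x: "x \<ge> 1" and e: "e > 0"
  have "ln (x powr e) \<le> x powr e - 1" by (rule ln_le_minus_one) (use x in simp)
  then have "e * ln x \<le> x powr e" using x by (simp add: ln_powr)
  then show ?thesis using e by (simp add: field_simps)
qed

definition B :: "nat \<Rightarrow> real" where "B k = (2 * real k + 1) ^ k"

lemma E_le_sqrt: "N \<ge> 1 \<Longrightarrow> E k N \<le> B k * sqrt (real N)"
proof (cases "k = 0")
  case True
  assume "N \<ge> 1" then show ?thesis using True by (simp add: B_def)
next
  case False
  assume N: "N \<ge> 1"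
  define e where "e = 1 / (2 * real k)"
  have e: "e > 0" using False by (simp add: e_def)
  have "H N \<le> 1 + ln (real N)" using H_le N by simp
  also have "\<dots> \<le> 1 + real N powr e / e" using ln_le_powr[of "real N" e] N e by simp
  also have "\<dots> \<le> (2 * real k + 1) * real N powr e"
  proof -
    have "1 \<le> real N powr e" using N e by (simp add: ge_one_powr_ge_zero)
    then show ?thesis by (simp add: e_def algebra_simps)
  qed
  finally have h: "H N \<le> (2 * real k + 1) * real N powr e" .
  have "E k N \<le> H N ^ k" by (rule E_le_H)
  also have "\<dots> \<le> ((2 * real k + 1) * real N powr e) ^ k"
    by (intro power_mono h H_nonneg)
  also have "\<dots> = B k * (real N powr e) ^ k" by (simp add: B_def power_mult_distrib)
  also have "(real N powr e) ^ k = real N powr (e * real k)"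
    using N by (simp add: powr_realpow' powr_powr[symmetric] flip: powr_realpow)
  also have "e * real k = 1/2" using False by (simp add: e_def)
  also have "real N powr (1/2) = sqrt (real N)" using N by (simp add: powr_half_sqrt)
  finally show ?thesis .
qed

definition cf :: "nat \<Rightarrow> nat \<Rightarrow> nat \<Rightarrow> real" where
  "cf m k N = E k N / real N ^ m"

definition T :: "nat \<Rightarrow> nat \<Rightarrow> real \<Rightarrow> real" where
  "T m k z = (\<Sum>N. cf m k N * z ^ N)"

lemma cf_0: "m \<ge> 1 \<Longrightarrow> cf m k 0 = 0"
  by (simp add: cf_def)

lemma cf_nonneg: "cf m k N \<ge> 0"
  by (simp add: cf_def E_nonneg)

lemma B_nonneg: "B k \<ge> 0" by (simp add: B_def)

lemma cf_le_B: "m \<ge> 1 \<Longrightarrow> cf m k N \<le> B k"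
proof (cases "N = 0")
  case True
  assume "m \<ge> 1" then show ?thesis using True by (simp add: cf_0 B_nonneg)
next
  case False
  assume m: "m \<ge> 1"
  have N: "real N \<ge> 1" using False by simp
  have "real N \<le> real N ^ m" using power_increasing[of 1 m "real N"] N m by simp
  then have "cf m k N \<le> E k N / real N"
    unfolding cf_def using N m
    by (intro divide_left_mono E_nonneg) auto
  also have "\<dots> \<le> B k * sqrt (real N) / real N"
    using N E_le_sqrt[of N k] by (intro divide_right_mono) auto
  also have "\<dots> \<le> B k"
  proof -
    have s1: "1 \<le> sqrt (real N)" using N by simp
    then have "sqrt (real N) * 1 \<le> sqrt (real N) * sqrt (real N)" by (intro mult_left_mono) auto
    then have "sqrt (real N) \<le> real N" using N by simp
    then have "B k * sqrt (real N) \<le> B k * real N" by (intro mult_left_mono B_nonneg)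
    then show ?thesis using N by (simp add: divide_simps)
  qed
  finally show ?thesis .
qed

lemma cf_le_powr: "m \<ge> 2 \<Longrightarrow> cf m k N \<le> B k * real N powr (-3/2)"
proof (cases "N = 0")
  case True
  assume "m \<ge> 2" then show ?thesis using True by (simp add: cf_0)
next
  case False
  assume m: "m \<ge> 2"
  have N: "real N \<ge> 1" using False by simp
  have "cf m k N \<le> E k N / real N ^ 2"
    unfolding cf_def using N m
    by (intro divide_left_mono E_nonneg) (auto intro: power_increasing)
  also have "\<dots> \<le> B k * sqrt (real N) / real N ^ 2"
    using N E_le_sqrt[of N k] by (intro divide_right_mono) auto
  also have "\<dots> = B k * (sqrt (real N) / real N ^ 2)" by simp
  also have "sqrt (real N) / real N ^ 2 = real N powr (-3/2)"
  proof -
    have "sqrt (real N) / real N ^ 2 = real N powr (1/2) / real N powr 2"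
      using N by (simp add: powr_half_sqrt powr_realpow)
    also have "\<dots> = real N powr (1/2 - 2)"
      by (rule powr_diff[symmetric])
    also have "(1/2 - 2 :: real) = -3/2" by simp
    finally show ?thesis .
  qed
  finally show ?thesis .
qed

lemma summable_cf: "m \<ge> 2 \<Longrightarrow> summable (cf m k)"
proof -
  assume m: "m \<ge> 2"
  have "summable (\<lambda>N. B k * real N powr (-3/2))"
    by (intro summable_mult) (simp add: summable_real_powr_iff)
  then show ?thesis
    by (rule summable_comparison_test'[where N=0]) (use m cf_le_powr cf_nonneg in auto)
qed

lemma summable_T: "m \<ge> 1 \<Longrightarrow> \<bar>z\<bar> < 1 \<Longrightarrow> summable (\<lambda>N. cf m k N * z ^ N)"
proof -
  assume m: "m \<ge> 1" and z: "\<bar>z\<bar> < 1"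
  have "summable (\<lambda>N. B k * \<bar>z\<bar> ^ N)"
    using z by (intro summable_mult summable_geometric) simp
  then show ?thesis
    by (rule summable_comparison_test'[where N=0])
       (use m cf_le_B cf_nonneg in \<open>auto simp: abs_mult power_abs intro!: mult_right_mono\<close>)
qed

lemma summable_T2: "m \<ge> 2 \<Longrightarrow> \<bar>z\<bar> \<le> 1 \<Longrightarrow> summable (\<lambda>N. cf m k N * z ^ N)"
proof -
  assume m: "m \<ge> 2" and z: "\<bar>z\<bar> \<le> 1"
  show ?thesis
    by (rule summable_comparison_test'[where N=0, OF summable_cf[OF m]])
       (use z cf_nonneg in \<open>auto simp: abs_mult power_abs intro!: mult_left_le power_le_one\<close>)
qed

lemma T_deriv_gen:
  assumes "m \<ge> 1" "\<bar>z\<bar> < 1"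
  shows "(T m k has_field_derivative (\<Sum>n. diffs (cf m k) n * z ^ n)) (at z)"
  unfolding T_def
  by (rule termdiffs_strong'[where K=1]) (use assms summable_T in auto)

lemma summable_diffs: "m \<ge> 1 \<Longrightarrow> \<bar>z\<bar> < 1 \<Longrightarrow> summable (\<lambda>n. diffs (cf m k) n * z ^ n)"
  by (rule termdiff_converges[where K=1]) (use summable_T in auto)

lemma T_split: "m \<ge> 1 \<Longrightarrow> summable (\<lambda>N. cf m k N * z ^ N) \<Longrightarrow>
    T m k z = (\<Sum>n. cf m k (Suc n) * z ^ n) * z"
  unfolding T_def by (subst powser_split_head(1)) (auto simp: cf_0)

lemma T_deriv:
  assumes "m \<ge> 2" "\<bar>z\<bar> < 1" "z \<noteq> 0"
  shows "(T m k has_field_derivative T (m - 1) k z / z) (at z)"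
proof -
  have "diffs (cf m k) n = cf (m - 1) k (Suc n)" for n
  proof (cases m)
    case (Suc j)
    have "real (Suc n) * (E k (Suc n) / real (Suc n) ^ Suc j) = E k (Suc n) / real (Suc n) ^ j"
      by (simp only: power_Suc) (simp add: field_simps del: of_nat_Suc)
    then show ?thesis using Suc by (simp add: diffs_def cf_def del: of_nat_Suc)
  qed (use assms in simp)
  moreover have "T (m - 1) k z = (\<Sum>n. cf (m - 1) k (Suc n) * z ^ n) * z"
    using assms by (intro T_split summable_T) auto
  ultimately show ?thesis using T_deriv_gen[of m z k] assms by simp
qed

lemma T_at_0: "m \<ge> 1 \<Longrightarrow> T m k 0 = 0"
  unfolding T_def by (simp add: cf_0)

lemma E_Suc_diff: "E (Suc j) (Suc n) - E (Suc j) n = cf 1 j n"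
  by (simp add: cf_def)

lemma T1_deriv_aux:
  assumes z: "\<bar>z\<bar> < 1"
  shows "(1 - z) * (\<Sum>n. diffs (cf 1 k) n * z ^ n) = (if k = 0 then 1 else T 1 (k - 1) z)"
proof -
  have d: "diffs (cf 1 k) n = E k (Suc n)" for n
    by (simp add: diffs_def cf_def)
  have d': "diffs (cf (Suc 0) k) n = E k (Suc n)" for n
    by (simp add: diffs_def cf_def)
  have sm: "summable (\<lambda>n. E k (Suc n) * z ^ n)"
    using summable_diffs[of 1 z k, unfolded d] z by simp
  show ?thesis
  proof (cases k)
    case 0
    have d0: "diffs (cf 1 0) n = 1" for n by (simp add: diffs_def cf_def)
    have "(1 - z) * (\<Sum>n. diffs (cf 1 k) n * z ^ n) = (1-z) * (\<Sum>n. z^n)" unfolding 0 d0 by simp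
    also have "\<dots> = 1" using z by (simp add: suminf_geometric)
    finally show ?thesis using 0 by simp
  next
    case (Suc j)
    have sm': "summable (\<lambda>n. E k n * z ^ n)"
      using sm by (subst summable_powser_split_head[symmetric]) 
    have split: "(\<Sum>n. E k n * z ^ n) = (\<Sum>n. E k (Suc n) * z ^ n) * z"
    proof -
      have e0: "E k 0 = 0" using Suc by simp
      show ?thesis using powser_split_head(1)[OF sm'] by (simp only: e0 add_0_left)
    qed
    have "(1 - z) * (\<Sum>n. diffs (cf 1 k) n * z ^ n) = (1 - z) * (\<Sum>n. E k (Suc n) * z ^ n)"
      by (simp only: d)
    also have "\<dots> = (\<Sum>n. E k (Suc n) * z ^ n) - (\<Sum>n. E k n * z ^ n)"
      unfolding split by (simp add: algebra_simps)
    also have "\<dots> = (\<Sum>n. E k (Suc n) * z ^ n - E k n * z ^ n)"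
      by (rule suminf_diff[OF sm sm'])
    also have "\<dots> = (\<Sum>n. cf 1 j n * z ^ n)"
      using E_Suc_diff[of j] Suc by (simp add: left_diff_distrib[symmetric])
    finally show ?thesis using Suc unfolding T_def by simp
  qed
qed

lemma T1_closed: "\<bar>z\<bar> < 1 \<Longrightarrow> T 1 k z = (- ln (1 - z)) ^ Suc k / fact (Suc k)"
proof (induction k arbitrary: z rule: less_induct)
  case (less k)
  have IH: "\<And>z. k \<noteq> 0 \<Longrightarrow> \<bar>z\<bar> < 1 \<Longrightarrow> T 1 (k - 1) z = (- ln (1 - z)) ^ k / fact k"
    using less.IH[of "k - 1"] by (cases k) auto
  have D: "(T 1 k has_field_derivative (- ln (1 - z)) ^ k / fact k / (1 - z)) (at z)"
    if z: "\<bar>z\<bar> < 1" for z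
  proof -
    have "(\<Sum>n. diffs (cf 1 k) n * z ^ n) = (if k = 0 then 1 else T 1 (k - 1) z) / (1 - z)"
      using T1_deriv_aux[OF z, of k] z by (simp add: field_simps)
    also have "\<dots> = (- ln (1 - z)) ^ k / fact k / (1 - z)"
      using IH[OF _ z] by auto
    finally show ?thesis using T_deriv_gen[of 1 z k] z by simp
  qed
  have D2: "((\<lambda>z. (- ln (1 - z)) ^ Suc k / fact (Suc k)) has_field_derivative
      (- ln (1 - z)) ^ k / fact k / (1 - z)) (at z)" if z: "\<bar>z\<bar> < 1" for z :: real
  proof -
    have l: "((\<lambda>z. - ln (1 - z)) has_field_derivative 1 / (1 - z)) (at z)"
      using z by (auto intro!: derivative_eq_intros simp: field_simps)
    have "((\<lambda>z. (- ln (1 - z)) ^ Suc k / fact (Suc k)) has_field_derivative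
      (1 + real k) * (1 / (1 - z) * (- ln (1 - z)) ^ k) / fact (Suc k)) (at z)"
      by (intro DERIV_cdivide DERIV_power_Suc l)
    moreover have "(1 + real k) * (1 / (1 - z) * (- ln (1 - z)) ^ k) / fact (Suc k)
        = (- ln (1 - z)) ^ k / fact k / (1 - z)"
    proof -
      have nz: "1 - z \<noteq> 0" "fact k \<noteq> (0::real)" "1 + real k \<noteq> 0" using z by auto
      show ?thesis using nz by (simp add: fact_Suc field_simps del: of_nat_Suc) (simp add: algebra_simps)
    qed
    ultimately show ?thesis by (metis mult.commute)
  qed
  have "\<exists>c. \<forall>x\<in>ball 0 1. T 1 k x - (- ln (1 - x)) ^ Suc k / fact (Suc k) = c"
  proof (rule has_field_derivative_zero_constant)
    fix x :: real assume "x \<in> ball 0 1"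
    then have x: "\<bar>x\<bar> < 1" by simp
    have "((\<lambda>x. T 1 k x - (- ln (1 - x)) ^ Suc k / fact (Suc k)) has_field_derivative
       (- ln (1 - x)) ^ k / fact k / (1 - x) - (- ln (1 - x)) ^ k / fact k / (1 - x)) (at x)"
      by (rule DERIV_diff[OF D[OF x] D2[OF x]])
    then show "((\<lambda>x. T 1 k x - (- ln (1 - x)) ^ Suc k / fact (Suc k)) has_field_derivative 0)
        (at x within ball 0 1)"
      by (simp add: has_field_derivative_at_within)
  qed simp
  then obtain c where c: "\<And>x. \<bar>x\<bar> < 1 \<Longrightarrow> T 1 k x - (- ln (1 - x)) ^ Suc k / fact (Suc k) = c"
    by auto
  have "c = 0" using c[of 0] by (simp add: T_at_0)
  then show ?case using c[of z] less.prems by simp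
qed

definition D :: "nat \<Rightarrow> nat \<Rightarrow> nat list set" where
  "D k N = {ns. length ns = k \<and> sorted_wrt (>) ns \<and> (\<forall>x\<in>set ns. 0 < x \<and> x < N)}"

definition W :: "nat list \<Rightarrow> real" where
  "W ns = (\<Prod>i<length ns. 1 / real (ns ! i))"

lemma finite_D: "finite (D k N)"
  by (rule finite_subset[OF _ finite_lists_length_eq[of "{..<N}" k]]) (auto simp: D_def)

lemma W_Cons: "W (j # ns) = 1 / real j * W ns"
  unfolding W_def length_Cons prod.lessThan_Suc_shift by simp

lemma W_nonneg: "W ns \<ge> 0"
  unfolding W_def by (auto intro!: prod_nonneg)

lemma D_Suc: "D (Suc k) N = (\<lambda>(j, ns). j # ns) ` (SIGMA j:{0<..<N}. D k j)"
proof (intro set_eqI iffI)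
  fix xs assume "xs \<in> D (Suc k) N"
  then obtain j ns where xs: "xs = j # ns" and "length ns = k" "sorted_wrt (>) (j # ns)"
    "\<forall>x\<in>set (j # ns). 0 < x \<and> x < N"
    unfolding D_def by (cases xs) auto
  then show "xs \<in> (\<lambda>(j, ns). j # ns) ` (SIGMA j:{0<..<N}. D k j)"
    by (auto simp: D_def intro!: image_eqI[of _ _ "(j, ns)"])
next
  fix xs assume "xs \<in> (\<lambda>(j, ns). j # ns) ` (SIGMA j:{0<..<N}. D k j)"
  then show "xs \<in> D (Suc k) N" by (auto simp: D_def) (metis less_trans)
qed

lemma inj_Cons: "inj_on (\<lambda>(j, ns). j # ns) A"
  by (auto simp: inj_on_def)

lemma E_eq: "E k N = (\<Sum>ns\<in>D k N. W ns)"
proof (induction k arbitrary: N)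
  case 0
  have "D 0 N = {[]}" by (auto simp: D_def)
  then show ?case by (simp add: W_def)
next
  case (Suc k)
  have "(\<Sum>ns\<in>D (Suc k) N. W ns) = (\<Sum>(j, ns)\<in>(SIGMA j:{0<..<N}. D k j). W (j # ns))"
    unfolding D_Suc by (subst sum.reindex[OF inj_Cons]) (simp add: case_prod_unfold)
  also have "\<dots> = (\<Sum>j\<in>{0<..<N}. \<Sum>ns\<in>D k j. 1 / real j * W ns)"
    by (subst sum.Sigma[symmetric]) (auto simp: finite_D W_Cons)
  also have "\<dots> = (\<Sum>j\<in>{0<..<N}. E k j / real j)"
    by (simp add: Suc sum_divide_distrib)
  also have "\<dots> = (\<Sum>j<N. E k j / real j)"
    by (rule sum.mono_neutral_left) auto
  finally show ?case by simp
qed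

lemma mz_Suc: "mz_indices (Suc k) = (\<lambda>(j, ns). j # ns) ` (SIGMA j:{0<..}. D k j)"
proof (intro set_eqI iffI)
  fix xs assume "xs \<in> mz_indices (Suc k)"
  then obtain j ns where xs: "xs = j # ns" and "length ns = k" "sorted_wrt (>) (j # ns)"
    "\<forall>x\<in>set (j # ns). 0 < x"
    unfolding mz_indices_def by (cases xs) auto
  then show "xs \<in> (\<lambda>(j, ns). j # ns) ` (SIGMA j:{0<..}. D k j)"
    by (auto simp: D_def intro!: image_eqI[of _ _ "(j, ns)"])
next
  fix xs assume "xs \<in> (\<lambda>(j, ns). j # ns) ` (SIGMA j:{0<..}. D k j)"
  then show "xs \<in> mz_indices (Suc k)" by (auto simp: D_def mz_indices_def)
qed

lemma prod_term: "(\<Prod>i<length (m # replicate k 1). real ((j # ns) ! i) ^ ((m # replicate k 1) ! i))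
   = real j ^ m * (\<Prod>i<k. real (ns ! i))"
  unfolding length_Cons length_replicate prod.lessThan_Suc_shift by simp

lemma W_alt: "length ns = k \<Longrightarrow> W ns = 1 / (\<Prod>i<k. real (ns ! i))"
  unfolding W_def by (simp add: prod_dividef)

lemma mpolylog_eq:
  assumes m: "m \<ge> 2" and z: "0 \<le> z" "z \<le> 1"
  shows "mpolylog (m # replicate k 1) z = T m k z"
proof -
  define g where "g ns = z ^ hd ns / (\<Prod>i<length (m # replicate k 1). real (ns ! i) ^ ((m # replicate k 1) ! i))" for ns
  have g: "g (j # ns) = z ^ j / real j ^ m * W ns" if "ns \<in> D k j" for j ns
    using that unfolding g_def prod_term by (simp add: W_alt D_def)
  have inner: "(\<Sum>ns\<in>D k j. g (j # ns)) = cf m k j * z ^ j" for j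
  proof -
    have "(\<Sum>ns\<in>D k j. g (j # ns)) = (\<Sum>ns\<in>D k j. z ^ j / real j ^ m * W ns)"
      by (rule sum.cong) (simp_all add: g)
    also have "\<dots> = z ^ j / real j ^ m * E k j" by (simp add: E_eq sum_distrib_left)
    also have "\<dots> = cf m k j * z ^ j" by (simp add: cf_def)
    finally show ?thesis .
  qed
  have "mpolylog (m # replicate k 1) z = infsum g (mz_indices (Suc k))"
    unfolding mpolylog_def g_def by (simp only: length_Cons length_replicate)
  also have "\<dots> = infsum (\<lambda>(j, ns). g (j # ns)) (SIGMA j:{0<..}. D k j)"
    unfolding mz_Suc by (subst infsum_reindex[OF inj_Cons]) (simp add: comp_def case_prod_unfold)
  also have "\<dots> = T m k z"
  proof (rule infsumI, rule has_sum_SigmaI)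
    fix j :: nat assume "j \<in> {0<..}"
    have "((\<lambda>ns. g (j # ns)) has_sum (\<Sum>ns\<in>D k j. g (j # ns))) (D k j)"
      by (rule has_sum_finite[OF finite_D])
    also have "(\<Sum>ns\<in>D k j. g (j # ns)) = cf m k j * z ^ j"
      by (rule inner)
    finally show "((\<lambda>y. case (j, y) of (j, ns) \<Rightarrow> g (j # ns)) has_sum cf m k j * z ^ j) (D k j)"
      by simp
  next
    have "((\<lambda>j. cf m k j * z ^ j) has_sum T m k z) UNIV"
      unfolding T_def using summable_T2[OF m, of z k] z
      by (intro sums_nonneg_imp_has_sum) (auto intro!: cf_nonneg mult_nonneg_nonneg)
    then show "((\<lambda>j. cf m k j * z ^ j) has_sum T m k z) {0<..}"
      by (subst has_sum_cong_neutral[where T=UNIV and g="\<lambda>j. cf m k j * z ^ j"]) 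
         (use m in \<open>auto simp: cf_0\<close>)
    then have sm: "(\<lambda>j. cf m k j * z ^ j) summable_on {0<..}" by (rule has_sum_imp_summable)
    show "(\<lambda>(j, ns). g (j # ns)) summable_on (SIGMA j:{0<..}. D k j)"
    proof (rule summable_on_SigmaI[where g="\<lambda>j. cf m k j * z ^ j"])
      fix j :: nat assume "j \<in> {0<..}"
      have "((\<lambda>ns. g (j # ns)) has_sum (\<Sum>ns\<in>D k j. g (j # ns))) (D k j)"
        by (rule has_sum_finite[OF finite_D])
      also have "(\<Sum>ns\<in>D k j. g (j # ns)) = cf m k j * z ^ j"
        by (rule inner)
      finally show "((\<lambda>y. case (j, y) of (j, ns) \<Rightarrow> g (j # ns)) has_sum cf m k j * z ^ j) (D k j)"
        by simp
    next
      show "(\<lambda>j. cf m k j * z ^ j) summable_on {0<..}" by (rule sm)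
    next
      fix j ns assume "j \<in> {0<..}" "ns \<in> D k j"
      then show "0 \<le> (case (j, ns) of (j, ns) \<Rightarrow> g (j # ns))"
        using z by (simp add: g W_nonneg)
    qed
  qed
  finally show ?thesis .
qed

lemma mzeta_eq:
  assumes m: "m \<ge> 2"
  shows "mzeta (m # replicate k 1) = T m k 1"
proof -
  have "mzeta (m # replicate k 1) = mpolylog (m # replicate k 1) 1"
    by (simp add: mzeta_def mpolylog_def)
  then show ?thesis using mpolylog_eq[OF m, of 1] by simp
qed

lemma telescope: "(\<Sum>p=0..M. g p - (if p = 0 then 0 else g (p - 1))) = (g M :: real)"
  for M :: nat and g :: "nat \<Rightarrow> real"
  by (induction M) auto

lemma BIN: "(\<Sum>k=0..n. a ^ (n - k) / fact (n - k) * (b ^ Suc k / fact (Suc k)))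
    = ((a + b) ^ Suc n - a ^ Suc n) / fact (Suc n :: nat)" for a b :: real
proof -
  have "(a + b) ^ Suc n = (b + a) ^ Suc n" by (simp add: add.commute)
  also have "\<dots> = (\<Sum>j\<le>Suc n. of_nat (Suc n choose j) * b ^ j * a ^ (Suc n - j))"
    by (rule binomial_ring)
  also have "\<dots> = a ^ Suc n + (\<Sum>k\<le>n. of_nat (Suc n choose Suc k) * b ^ Suc k * a ^ (n - k))"
    by (subst sum.atMost_Suc_shift) simp
  finally have "((a + b) ^ Suc n - a ^ Suc n) / fact (Suc n)
      = (\<Sum>k\<le>n. of_nat (Suc n choose Suc k) * b ^ Suc k * a ^ (n - k)) / fact (Suc n)" by simp
  also have "\<dots> = (\<Sum>k\<le>n. a ^ (n - k) / fact (n - k) * (b ^ Suc k / fact (Suc k)))"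
    unfolding sum_divide_distrib
  proof (rule sum.cong)
    fix k assume k: "k \<in> {..n}"
    have h: "fact (Suc k) * fact (n - k) * (Suc n choose Suc k) = fact (Suc n)"
      using binomial_fact_lemma[of "Suc k" "Suc n"] k by simp
    have h': "real (Suc n choose Suc k) * (fact (Suc k) * fact (n - k)) = fact (Suc n)"
      using arg_cong[OF h, of real] by (simp only: of_nat_mult of_nat_fact mult_ac)
    have aux: "C * (F1 * F2) = F \<Longrightarrow> F1 \<noteq> 0 \<Longrightarrow> F2 \<noteq> 0 \<Longrightarrow> F \<noteq> 0
       \<Longrightarrow> C * x * y / F = y / F2 * (x / F1)" for C F1 F2 F x y :: real
      by (auto simp: field_simps)
    show "of_nat (Suc n choose Suc k) * b ^ Suc k * a ^ (n - k) / fact (Suc n)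
        = a ^ (n - k) / fact (n - k) * (b ^ Suc k / fact (Suc k))"
      by (rule aux[OF h']) auto
  qed simp
  finally show ?thesis by (simp add: atLeast0AtMost)
qed

lemma deriv_logpow:
  assumes z: "(z::real) > 0"
  shows "((\<lambda>z. (- ln z) ^ p / fact p) has_field_derivative
          (if p = 0 then 0 else - ((- ln z) ^ (p - 1) / fact (p - 1) / z))) (at z)"
proof (cases p)
  case 0 then show ?thesis by simp
next
  case (Suc q)
  have l: "((\<lambda>z. - ln z) has_field_derivative - (1 / z)) (at z)"
    by (rule DERIV_minus[OF DERIV_ln_divide[OF z]])
  have "((\<lambda>z. (- ln z) ^ Suc q / fact (Suc q)) has_field_derivative
      (1 + real q) * (- (1 / z) * (- ln z) ^ q) / fact (Suc q)) (at z)"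
    by (intro DERIV_cdivide DERIV_power_Suc l)
  moreover have "(1 + real q) * (- (1 / z) * (- ln z) ^ q) / fact (Suc q)
        = - ((- ln z) ^ q / fact q / z)"
  proof -
    have nz: "z \<noteq> 0" "fact q \<noteq> (0::real)" "1 + real q \<noteq> 0" using z by auto
    show ?thesis using nz by (simp add: fact_Suc field_simps del: of_nat_Suc) (simp add: algebra_simps)
  qed
  ultimately show ?thesis using Suc by (simp add: mult_ac)
qed

lemma inner_deriv:
  assumes z: "0 < z" "z < 1"
  shows "((\<lambda>z. \<Sum>p=0..M. (- ln z) ^ p / fact p * T (M + 2 - p) k z) has_field_derivative
          (- ln z) ^ M / fact M * T 1 k z / z) (at z)"
proof -
  define g where "g p = (- ln z) ^ p / fact p * T (M + 1 - p) k z / z" for p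
  have "((\<lambda>z. \<Sum>p=0..M. (- ln z) ^ p / fact p * T (M + 2 - p) k z) has_field_derivative
      (\<Sum>p=0..M. g p - (if p = 0 then 0 else g (p - 1)))) (at z)"
  proof (rule DERIV_sum)
    fix p assume p: "p \<in> {0..M}"
    have T': "(T (M + 2 - p) k has_field_derivative T (M + 1 - p) k z / z) (at z)"
      using T_deriv[of "M + 2 - p" z k] p z by (simp add: Suc_diff_le)
    have "((\<lambda>z. (- ln z) ^ p / fact p * T (M + 2 - p) k z) has_field_derivative
       (if p = 0 then 0 else - ((- ln z) ^ (p - 1) / fact (p - 1) / z)) * T (M + 2 - p) k z
       + T (M + 1 - p) k z / z * ((- ln z) ^ p / fact p)) (at z)"
      by (rule DERIV_mult[OF deriv_logpow[OF z(1)] T'])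
    moreover have "(if p = 0 then 0 else - ((- ln z) ^ (p - 1) / fact (p - 1) / z)) * T (M + 2 - p) k z
       + T (M + 1 - p) k z / z * ((- ln z) ^ p / fact p) = g p - (if p = 0 then 0 else g (p - 1))"
      using p by (cases p) (auto simp: g_def mult_ac)
    ultimately show "((\<lambda>z. (- ln z) ^ p / fact p * T (M + 2 - p) k z) has_field_derivative
      g p - (if p = 0 then 0 else g (p - 1))) (at z)" by simp
  qed
  also have "(\<Sum>p=0..M. g p - (if p = 0 then 0 else g (p - 1))) = g M" by (rule telescope)
  also have "g M = (- ln z) ^ M / fact M * T 1 k z / z" by (simp add: g_def)
  finally show ?thesis .
qed

definition A :: "nat \<Rightarrow> real \<Rightarrow> real" where
  "A n z = (\<Sum>k=0..n. \<Sum>p=0..n-k. (- ln z) ^ p / fact p * T (n - k + 2 - p) k z)"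

definition Q :: "nat \<Rightarrow> real \<Rightarrow> real \<Rightarrow> real" where
  "Q n a b = ((a + b) ^ Suc n - a ^ Suc n) / fact (Suc n)"

lemma A_deriv:
  assumes z: "0 < z" "z < 1"
  shows "(A n has_field_derivative Q n (- ln z) (- ln (1 - z)) / z) (at z)"
proof -
  have "(A n has_field_derivative (\<Sum>k=0..n. (- ln z) ^ (n - k) / fact (n - k) * T 1 k z / z)) (at z)"
    unfolding A_def by (intro DERIV_sum inner_deriv z)
  also have "(\<Sum>k=0..n. (- ln z) ^ (n - k) / fact (n - k) * T 1 k z / z)
     = (\<Sum>k=0..n. (- ln z) ^ (n - k) / fact (n - k) * ((- ln (1 - z)) ^ Suc k / fact (Suc k))) / z"
    unfolding sum_divide_distrib using z T1_closed[of z] by (intro sum.cong refl) simp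
  also have "\<dots> = Q n (- ln z) (- ln (1 - z)) / z" by (simp only: BIN Q_def)
  finally show ?thesis .
qed

definition cc :: "nat \<Rightarrow> real \<Rightarrow> real" where
  "cc n z = ((- ln z) ^ Suc (Suc n) + (- ln (1 - z)) ^ Suc (Suc n)
      - (- ln z + - ln (1 - z)) ^ Suc (Suc n)) / fact (Suc (Suc n))"

definition Phi :: "nat \<Rightarrow> real \<Rightarrow> real" where
  "Phi n z = A n z + A n (1 - z) - cc n z"

lemma alg0:
  fixes z w X Y U F :: real
  assumes "z \<noteq> 0" "w \<noteq> 0" "F \<noteq> 0"
  shows "(U - X) / F / z + (U - Y) / F / w * (- 1)
     - ((- (1 / z) * X) + (1 / w * Y) - ((- (1 / z) + 1 / w) * U)) / F = 0"
  using assms by (simp add: field_simps)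

lemma alg:
  fixes z X Y U F c :: real
  assumes "z \<noteq> 0" "1 - z \<noteq> 0" "F \<noteq> 0" "c \<noteq> 0"
  shows "(U - X) / F / z + (U - Y) / F / (1 - z) * (- 1)
     - (c * (- (1 / z) * X) + c * (1 / (1 - z) * Y) - c * ((- (1 / z) + 1 / (1 - z)) * U)) / (c * F) = 0"
proof -
  have "c * (- (1 / z) * X) + c * (1 / (1 - z) * Y) - c * ((- (1 / z) + 1 / (1 - z)) * U)
     = c * ((- (1 / z) * X) + (1 / (1 - z) * Y) - ((- (1 / z) + 1 / (1 - z)) * U))"
    by (simp only: distrib_left right_diff_distrib)
  then show ?thesis using alg0[of z "1 - z" F U X Y] assms by simp
qed

lemma Phi_deriv:
  assumes z: "0 < z" "z < 1"
  shows "(Phi n has_field_derivative 0) (at z)"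
proof -
  have da: "((\<lambda>z. - ln z) has_field_derivative - (1 / z)) (at z)"
    by (rule DERIV_minus[OF DERIV_ln_divide[OF z(1)]])
  have db: "((\<lambda>z. - ln (1 - z)) has_field_derivative 1 / (1 - z)) (at z)"
    using z by (auto intro!: derivative_eq_intros simp: field_simps)
  have du: "((\<lambda>z. - ln z + - ln (1 - z)) has_field_derivative - (1 / z) + 1 / (1 - z)) (at z)"
    by (rule DERIV_add[OF da db])
  note pa = DERIV_power_Suc[OF da, of "Suc n"]
  note pb = DERIV_power_Suc[OF db, of "Suc n"]
  note pu = DERIV_power_Suc[OF du, of "Suc n"]
  have ccD: "(cc n has_field_derivative
     ((1 + real (Suc n)) * (- (1 / z) * (- ln z) ^ Suc n) + (1 + real (Suc n)) * (1 / (1 - z) * (- ln (1 - z)) ^ Suc n)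
      - (1 + real (Suc n)) * ((- (1 / z) + 1 / (1 - z)) * (- ln z + - ln (1 - z)) ^ Suc n)) / fact (Suc (Suc n))) (at z)"
    unfolding cc_def by (intro DERIV_cdivide DERIV_diff DERIV_add pa pb pu)
  have lin: "((\<lambda>z. 1 - z) has_field_derivative - 1) (at z)"
    by (auto intro!: derivative_eq_intros)
  have A1: "(A n has_field_derivative Q n (- ln (1 - z)) (- ln z) / (1 - z)) (at (1 - z))"
    using A_deriv[of "1 - z" n] z by simp
  have A2: "((\<lambda>z. A n (1 - z)) has_field_derivative Q n (- ln (1 - z)) (- ln z) / (1 - z) * (- 1)) (at z)"
    by (rule DERIV_chain2[OF A1 lin])
  have PD: "(Phi n has_field_derivative Q n (- ln z) (- ln (1 - z)) / z + Q n (- ln (1 - z)) (- ln z) / (1 - z) * (- 1) -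
     ((1 + real (Suc n)) * (- (1 / z) * (- ln z) ^ Suc n) + (1 + real (Suc n)) * (1 / (1 - z) * (- ln (1 - z)) ^ Suc n)
      - (1 + real (Suc n)) * ((- (1 / z) + 1 / (1 - z)) * (- ln z + - ln (1 - z)) ^ Suc n)) / fact (Suc (Suc n))) (at z)"
    unfolding Phi_def[abs_def] by (intro DERIV_diff DERIV_add A_deriv z A2 ccD)
  have fs: "fact (Suc (Suc n)) = (1 + real (Suc n)) * (fact (Suc n) :: real)"
    by (simp add: fact_Suc del: of_nat_Suc)
  have "Q n (- ln z) (- ln (1 - z)) / z + Q n (- ln (1 - z)) (- ln z) / (1 - z) * (- 1) -
     ((1 + real (Suc n)) * (- (1 / z) * (- ln z) ^ Suc n) + (1 + real (Suc n)) * (1 / (1 - z) * (- ln (1 - z)) ^ Suc n)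
      - (1 + real (Suc n)) * ((- (1 / z) + 1 / (1 - z)) * (- ln z + - ln (1 - z)) ^ Suc n)) / fact (Suc (Suc n)) = 0"
  proof -
    have eqc: "(- ln (1 - z) + - ln z) = (- ln z + - ln (1 - z))" by simp
    show ?thesis unfolding Q_def fs eqc using z by (intro alg) auto
  qed
  with PD show ?thesis by simp
qed

lemma LIM1: "((\<lambda>z. (- ln z) ^ p * z) \<longlongrightarrow> 0) (at_right (0::real))"
proof -
  have f: "filterlim (\<lambda>z::real. - ln z) at_top (at_right 0)"
    unfolding filterlim_uminus_at_top by (simp add: ln_at_0)
  have "((\<lambda>z. (- ln z) ^ p / exp (- ln z)) \<longlongrightarrow> 0) (at_right (0::real))"
    by (rule filterlim_compose[OF tendsto_power_div_exp_0 f])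
  moreover have "eventually (\<lambda>z. (- ln z) ^ p / exp (- ln z) = (- ln z) ^ p * z) (at_right (0::real))"
    using eventually_at_right_real[OF zero_less_one]
    by eventually_elim (simp add: exp_minus divide_inverse)
  ultimately show ?thesis by (rule Lim_transform_eventually)
qed

lemma LIM2: "((\<lambda>z. - ln (1 - z) / z) \<longlongrightarrow> 1) (at_right (0::real))"
  by real_asymp

lemma LIM3: "((\<lambda>z. - ln (1 - z)) \<longlongrightarrow> 0) (at_right (0::real))"
proof -
  have "((\<lambda>z. 1 - z) \<longlongrightarrow> 1 - 0) (at_right (0::real))"
    by (intro tendsto_intros)
  then have "((\<lambda>z. ln (1 - z)) \<longlongrightarrow> ln 1) (at_right (0::real))"
    by (intro tendsto_ln) auto
  then show ?thesis using tendsto_minus by fastforce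
qed

lemma T_le:
  assumes m: "m \<ge> 2" and z: "0 \<le> z" "z \<le> 1"
  shows "0 \<le> T m k z" "T m k z \<le> z * T m k 1"
proof -
  have s1: "summable (\<lambda>N. cf m k N * z ^ N)" using summable_T2[OF m] z by simp
  have s2: "summable (cf m k)" by (rule summable_cf[OF m])
  show "0 \<le> T m k z" unfolding T_def
    by (intro suminf_nonneg s1) (use z cf_nonneg in simp)
  have "T m k z \<le> (\<Sum>N. z * cf m k N)" unfolding T_def
  proof (rule suminf_le)
    fix N show "cf m k N * z ^ N \<le> z * cf m k N"
    proof (cases N)
      case 0 then show ?thesis using m by (simp add: cf_0)
    next
      case (Suc M)
      have "z ^ N \<le> z" using z Suc by (simp add: power_le_one mult_left_le)
      then have "z ^ N * cf m k N \<le> z * cf m k N" by (rule mult_right_mono) (rule cf_nonneg)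
      then show ?thesis by (simp add: mult.commute)
    qed
  qed (use s1 s2 summable_mult in auto)
  also have "\<dots> = z * T m k 1" unfolding T_def by (simp add: suminf_mult s2)
  finally show "T m k z \<le> z * T m k 1" .
qed

lemma T_cont: assumes m: "m \<ge> 2" shows "continuous_on {-1..1} (T m k)"
proof -
  have "uniform_limit {-1..1} (\<lambda>N x. \<Sum>i<N. cf m k i * x ^ i) (\<lambda>x. suminf (\<lambda>i. cf m k i * x ^ i)) sequentially"
    by (rule Weierstrass_m_test[OF _ summable_cf[OF m]])
       (auto simp: abs_mult power_abs cf_nonneg intro!: mult_left_le power_le_one)
  then have "uniform_limit {-1..1} (\<lambda>N x. \<Sum>i<N. cf m k i * x ^ i) (T m k) sequentially"
    by (simp add: T_def[abs_def])
  then show ?thesis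
    by (rule uniform_limit_theorem[rotated]) (auto intro!: continuous_intros eventuallyI)
qed

lemma T_lim1: assumes m: "m \<ge> 2" shows "((\<lambda>z. T m k (1 - z)) \<longlongrightarrow> T m k 1) (at_right 0)"
proof -
  have "continuous_on {0..1} (\<lambda>z. T m k (1 - z))"
    by (rule continuous_on_compose2[OF T_cont[OF m]]) (auto intro!: continuous_intros)
  then have "\<forall>x\<in>{0..1}. ((\<lambda>z. T m k (1 - z)) \<longlongrightarrow> T m k (1 - x)) (at x within {0..1})"
    unfolding continuous_on_def .
  then have "((\<lambda>z. T m k (1 - z)) \<longlongrightarrow> T m k (1 - 0)) (at 0 within {0..1})"
    by (rule bspec) simp
  then show ?thesis by (simp add: at_within_Icc_at_right)
qed

lemma A_lim0: "((\<lambda>z. A n z) \<longlongrightarrow> 0) (at_right 0)"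
proof -
  have trm: "((\<lambda>z. (- ln z) ^ p / fact p * T (n - k + 2 - p) k z) \<longlongrightarrow> 0) (at_right 0)"
    if "k \<in> {0..n}" "p \<in> {0..n-k}" for k p
  proof -
    define m where "m = n - k + 2 - p"
    have m: "m \<ge> 2" using that by (simp add: m_def)
    have up: "((\<lambda>z. (- ln z) ^ p * z * (T m k 1 / fact p)) \<longlongrightarrow> 0 * (T m k 1 / fact p)) (at_right 0)"
      by (intro tendsto_mult LIM1 tendsto_const)
    have up': "((\<lambda>z. (- ln z) ^ p * z * (T m k 1 / fact p)) \<longlongrightarrow> 0) (at_right 0)"
      using up by simp
    have ev: "eventually (\<lambda>z. z \<in> {0<..<1}) (at_right (0::real))"
      by (rule eventually_at_right_real[OF zero_less_one])
    show ?thesis unfolding m_def[symmetric]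
    proof (rule tendsto_sandwich[OF _ _ tendsto_const up'])
      show "eventually (\<lambda>z. 0 \<le> (- ln z) ^ p / fact p * T m k z) (at_right 0)"
        using ev
      proof eventually_elim
        case (elim z)
        then have "- ln z \<ge> 0" by simp
        then show ?case using elim T_le(1)[OF m, of z k] by (auto intro!: mult_nonneg_nonneg)
      qed
      show "eventually (\<lambda>z. (- ln z) ^ p / fact p * T m k z \<le> (- ln z) ^ p * z * (T m k 1 / fact p)) (at_right 0)"
        using ev
      proof eventually_elim
        case (elim z)
        then have "- ln z \<ge> 0" by simp
        then have "(- ln z) ^ p / fact p * T m k z \<le> (- ln z) ^ p / fact p * (z * T m k 1)"
          using elim T_le(2)[OF m, of z k] by (intro mult_left_mono) auto
        then show ?case by (simp add: field_simps)
      qed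
    qed
  qed
  show ?thesis unfolding A_def
    by (intro tendsto_null_sum trm) auto
qed

lemma sum0: "(\<Sum>p=0..M. 0 ^ p / fact p * f p) = (f 0 :: real)"
  by (induction M) auto

lemma A_lim1: "((\<lambda>z. A n (1 - z)) \<longlongrightarrow> (\<Sum>k=0..n. T (n - k + 2) k 1)) (at_right 0)"
proof -
  have "((\<lambda>z. A n (1 - z)) \<longlongrightarrow> (\<Sum>k=0..n. \<Sum>p=0..n-k. 0 ^ p / fact p * T (n - k + 2 - p) k 1)) (at_right 0)"
    unfolding A_def
  proof (intro tendsto_sum)
    fix k p assume "k \<in> {0..n}" "p \<in> {0..n-k}"
    then have m: "n - k + 2 - p \<ge> 2" by simp
    show "((\<lambda>z. (- ln (1 - z)) ^ p / fact p * T (n - k + 2 - p) k (1 - z)) \<longlongrightarrow>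
        0 ^ p / fact p * T (n - k + 2 - p) k 1) (at_right 0)"
      by (intro tendsto_intros LIM3 T_lim1[OF m]) simp
  qed
  then show ?thesis by (simp only: sum0 diff_zero)
qed

lemma cc_lim: "((\<lambda>z. cc n z) \<longlongrightarrow> 0) (at_right 0)"
proof -
  define a where "a z = - ln z" for z :: real
  define b where "b z = - ln (1 - z)" for z :: real
  have cc_eq: "cc n z = b z ^ Suc (Suc n) / fact (Suc (Suc n)) -
     (\<Sum>k=0..Suc n. a z ^ (Suc n - k) / fact (Suc n - k) * (b z ^ Suc k / fact (Suc k)))" for z
    unfolding BIN cc_def a_def b_def by (simp add: diff_divide_distrib add_divide_distrib)
  have ev: "eventually (\<lambda>z. z \<in> {0<..<1}) (at_right (0::real))"
    by (rule eventually_at_right_real[OF zero_less_one])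
  have t1: "((\<lambda>z. b z ^ Suc (Suc n) / fact (Suc (Suc n))) \<longlongrightarrow> 0 ^ Suc (Suc n) / fact (Suc (Suc n))) (at_right 0)"
    unfolding b_def by (intro tendsto_intros LIM3) auto
  have t2: "((\<lambda>z. a z ^ (Suc n - k) / fact (Suc n - k) * (b z ^ Suc k / fact (Suc k))) \<longlongrightarrow> 0) (at_right 0)"
    for k
  proof -
    have "((\<lambda>z. ((- ln z) ^ (Suc n - k) * z) * (- ln (1 - z) / z) * (- ln (1 - z)) ^ k
        / (fact (Suc n - k) * fact (Suc k))) \<longlongrightarrow> 0 * 1 * 0 ^ k / (fact (Suc n - k) * fact (Suc k))) (at_right (0::real))"
    proof -
      have l: "((\<lambda>z. ((- ln z) ^ (Suc n - k) * z) * (- ln (1 - z) / z) * (- ln (1 - z)) ^ k)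
          \<longlongrightarrow> 0 * 1 * 0 ^ k) (at_right (0::real))"
        by (rule tendsto_mult[OF tendsto_mult[OF LIM1 LIM2] tendsto_power[OF LIM3]])
      show ?thesis by (rule tendsto_divide[OF l tendsto_const]) auto
    qed
    moreover have "eventually (\<lambda>z. ((- ln z) ^ (Suc n - k) * z) * (- ln (1 - z) / z) * (- ln (1 - z)) ^ k
        / (fact (Suc n - k) * fact (Suc k)) = a z ^ (Suc n - k) / fact (Suc n - k) * (b z ^ Suc k / fact (Suc k))) (at_right 0)"
      using ev by eventually_elim (auto simp: a_def b_def field_simps)
    ultimately show ?thesis by (auto intro: Lim_transform_eventually)
  qed
  have "((\<lambda>z. b z ^ Suc (Suc n) / fact (Suc (Suc n)) -
     (\<Sum>k=0..Suc n. a z ^ (Suc n - k) / fact (Suc n - k) * (b z ^ Suc k / fact (Suc k)))) \<longlongrightarrow> 0 - 0) (at_right 0)"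
    using t1 by (intro tendsto_diff tendsto_null_sum t2) auto
  then show ?thesis by (simp add: cc_eq)
qed

theorem corollary7:
  fixes n :: nat
  shows "(\<Sum>k=0..n. \<Sum>p=0..n-k. ln 2 ^ p / fact p *
            mpolylog ((n - k + 2 - p) # replicate k 1) (1/2))
         = (1 - 2 ^ (n+1)) / fact (n+2) * ln 2 ^ (n+2)
           + 1/2 * (\<Sum>k=0..n. mzeta ((n - k + 2) # replicate k 1))"
proof -
  define A1 where "A1 = (\<Sum>k=0..n. T (n - k + 2) k 1)"
  have "\<exists>c. \<forall>x\<in>{0<..<1}. Phi n x = c"
  proof (rule has_field_derivative_zero_constant)
    fix x :: real assume "x \<in> {0<..<1}"
    then show "(Phi n has_field_derivative 0) (at x within {0<..<1})"
      using Phi_deriv[of x n] by (auto intro: has_field_derivative_at_within)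
  qed simp
  then obtain C where C: "\<And>x. x \<in> {0<..<1} \<Longrightarrow> Phi n x = C" by blast
  have lim: "(Phi n \<longlongrightarrow> 0 + A1 - 0) (at_right 0)"
    unfolding Phi_def[abs_def] A1_def by (intro tendsto_diff tendsto_add A_lim0 A_lim1 cc_lim)
  have "eventually (\<lambda>z. Phi n z = C) (at_right (0::real))"
    using eventually_at_right_real[OF zero_less_one] by eventually_elim (simp add: C)
  then have "((\<lambda>z. C) \<longlongrightarrow> 0 + A1 - 0) (at_right (0::real))"
    using lim by (auto intro: Lim_transform_eventually)
  then have "C = A1" by (simp add: tendsto_const_iff)
  with C[of "1/2"] have Phi_half: "Phi n (1/2) = A1" by simp
  define L where "L = ln (2::real)"
  have ln_half: "- ln (1/2::real) = L" by (simp add: L_def ln_div)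
  have half: "1 - 1/2 = (1/2::real)" by simp
  have cch: "cc n (1/2) = (2 - 2 ^ Suc (Suc n)) * L ^ Suc (Suc n) / fact (Suc (Suc n))"
    unfolding cc_def half ln_half by (simp add: power_mult_distrib algebra_simps)
  have Ah: "A n (1/2) = (\<Sum>k=0..n. \<Sum>p=0..n-k. ln 2 ^ p / fact p *
            mpolylog ((n - k + 2 - p) # replicate k 1) (1/2))"
    unfolding A_def ln_half L_def
  proof (intro sum.cong refl)
    fix k p assume "k \<in> {0..n}" "p \<in> {0..n - k}"
    then show "ln 2 ^ p / fact p * T (n - k + 2 - p) k (1 / 2) =
        ln 2 ^ p / fact p * mpolylog ((n - k + 2 - p) # replicate k 1) (1 / 2)"
      using mpolylog_eq[of "n - k + 2 - p" "1/2" k] by simp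
  qed
  have Z: "(\<Sum>k=0..n. mzeta ((n - k + 2) # replicate k 1)) = A1"
    unfolding A1_def
  proof (intro sum.cong refl)
    fix k assume "k \<in> {0..n}"
    then show "mzeta ((n - k + 2) # replicate k 1) = T (n - k + 2) k 1"
      using mzeta_eq[of "n - k + 2" k] by simp
  qed
  have "2 * A n (1/2) - cc n (1/2) = A1" using Phi_half by (simp add: Phi_def half)
  then have "A n (1/2) = (A1 + cc n (1/2)) / 2" by simp
  also have "\<dots> = (1 - 2 ^ (n+1)) / fact (n+2) * ln 2 ^ (n+2) + 1/2 * A1"
    unfolding cch L_def by (simp add: field_simps)
  finally show ?thesis using Ah Z by simp
qed

end
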